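(* Let $V^1$ and $V^2$ be $\mathbb{Q}$-VASRs of dimensions $d$ and $e$ respectively, and let $T\in\mathbb{Q}^{e\times d}$ be a matrix such that $V^1\Vdash_T V^2$. Then $T$ is coherent with respect to $V^1$.
   Context: A $\mathbb{Q}$-VASR of dimension $d$ is a finite set $V\subseteq\{0,1\}^d\times\mathbb{Q}^d$ of transformers $(\vec r,\vec a)$ (reset vector $\vec r$, addition vector $\vec a$); it defines the transition system on $\mathbb{Q}^d$ with $\vec u\to_V\vec v$ iff $\vec v=\vec r*\vec u+\vec a$ for some $(\vec r,\vec a)\in V$, where $*$ is the pointwise product. $V^1\Vdash_TV^2$ means $T$ is a linear simulation: for all $\vec u,\vec v\in\mathbb{Q}^d$ with $\vec u\to_{V^1}\vec v$ we have $T\vec u\to_{V^2}T\vec v$. Dimensions $i,j\in\{1,\dots,d\}$ are coherent dimensions of $V$ if $r_i=r_j$ for every $(\vec r,\vec a)\in V$; this is an equivalence relation whose classes are the coherence classes of $V$. A matrix $T\in\mathbb{Q}^{e\times d}$ is coherent with respect to $V$ iff each of its rows has nonzero entries only in columns belonging to a single coherence class of $V$. *)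

theory Defs
  imports "HOL-Analysis.Analysis"
begin

definition qvasr :: "((rat ^ 'd) \<times> (rat ^ 'd)) set \<Rightarrow> bool" where
  "qvasr V \<longleftrightarrow> finite V \<and> (\<forall>(r, a) \<in> V. \<forall>i. r $ i \<in> {0, 1})"

definition vasr_step :: "((rat ^ 'd) \<times> (rat ^ 'd)) set \<Rightarrow> rat ^ 'd \<Rightarrow> rat ^ 'd \<Rightarrow> bool" where
  "vasr_step V u v \<longleftrightarrow> (\<exists>(r, a) \<in> V. v = (\<chi> i. r $ i * u $ i + a $ i))"

definition lin_sim :: "((rat ^ 'd) \<times> (rat ^ 'd)) set \<Rightarrow> rat ^ 'd ^ 'e \<Rightarrow> ((rat ^ 'e) \<times> (rat ^ 'e)) set \<Rightarrow> bool" where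
  "lin_sim V1 T V2 \<longleftrightarrow> (\<forall>u v. vasr_step V1 u v \<longrightarrow> vasr_step V2 (T *v u) (T *v v))"

definition coherent_dims :: "((rat ^ 'd) \<times> (rat ^ 'd)) set \<Rightarrow> 'd \<Rightarrow> 'd \<Rightarrow> bool" where
  "coherent_dims V i j \<longleftrightarrow> (\<forall>(r, a) \<in> V. r $ i = r $ j)"

definition coherent_matrix :: "((rat ^ 'd) \<times> (rat ^ 'd)) set \<Rightarrow> rat ^ 'd ^ 'e \<Rightarrow> bool" where
  "coherent_matrix V T \<longleftrightarrow> (\<forall>k. \<exists>i. \<forall>j. T $ k $ j \<noteq> 0 \<longrightarrow> coherent_dims V i j)"

end

theory Submission
  imports Defs
begin

lemma sum_two_pts:
  fixes f :: "'d::finite \<Rightarrow> rat"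
  assumes "j1 \<noteq> j2"
  shows "(\<Sum>j\<in>UNIV. f j * (if j = j1 then x else if j = j2 then y else 0)) = f j1 * x + f j2 * y"
proof -
  have "(\<Sum>j\<in>UNIV. f j * (if j = j1 then x else if j = j2 then y else 0))
      = (\<Sum>j\<in>UNIV. (if j = j1 then f j1 * x else 0) + (if j = j2 then f j2 * y else 0))"
    by (rule sum.cong) (use assms in auto)
  also have "\<dots> = f j1 * x + f j2 * y" by (simp add: sum.distrib)
  finally show ?thesis .
qed

lemma key:
  fixes V1 :: "((rat ^ 'd) \<times> (rat ^ 'd)) set"
    and V2 :: "((rat ^ 'e) \<times> (rat ^ 'e)) set"
    and T :: "rat ^ 'd ^ 'e"
  assumes "qvasr V2" and "lin_sim V1 T V2"
    and ra: "(r, a) \<in> V1" and r1: "r $ j1 = 1" and r2: "r $ j2 = 0"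
    and t1: "T $ k $ j1 \<noteq> 0" and t2: "T $ k $ j2 \<noteq> 0"
  shows False
proof -
  have ne: "j1 \<noteq> j2" using r1 r2 by auto
  define A where "A = (\<lambda>p. snd p $ k) ` V2"
  have finA: "finite A" using assms(1) unfolding A_def qvasr_def by auto
  obtain m :: rat where m: "m \<notin> A" using finA ex_new_if_finite[OF infinite_UNIV_char_0] by blast
  define c where "c = (T *v a) $ k"
  define T1 where "T1 = T $ k $ j1"
  define T2 where "T2 = T $ k $ j2"
  define y where "y = (c - m) / T2"
  have ym: "c - T2 * y = m" using t2 unfolding y_def T2_def by simp
  define x where "x = (m - c) / T1"
  have xm: "T1 * x + c = m" using t1 unfolding x_def T1_def by simp
  define u :: "rat ^ 'd" where "u = (\<chi> i. if i = j1 then x else if i = j2 then y else 0)"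
  define v :: "rat ^ 'd" where "v = (\<chi> i. r $ i * u $ i + a $ i)"
  have "vasr_step V1 u v" unfolding vasr_step_def v_def using ra by blast
  hence "vasr_step V2 (T *v u) (T *v v)" using assms(2) unfolding lin_sim_def by blast
  then obtain r' a' where ra': "(r', a') \<in> V2"
    and eq: "T *v v = (\<chi> i. r' $ i * (T *v u) $ i + a' $ i)"
    unfolding vasr_step_def by blast
  have aA: "a' $ k \<in> A" unfolding A_def using ra' by force
  have r'k: "r' $ k \<in> {0, 1}" using assms(1) ra' unfolding qvasr_def by blast
  have Tu: "(T *v u) $ k = T1 * x + T2 * y"
    unfolding matrix_vector_mult_def u_def T1_def T2_def
    using sum_two_pts[OF ne, of "\<lambda>j. T $ k $ j" x y] by simp
  have Tv0: "(T *v v) $ k = (\<Sum>j\<in>UNIV. T $ k $ j * (r $ j * u $ j)) + c"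
    unfolding matrix_vector_mult_def v_def c_def by (simp add: distrib_left sum.distrib)
  have "(\<Sum>j\<in>UNIV. T $ k $ j * (r $ j * u $ j)) = (\<Sum>j\<in>UNIV. T $ k $ j * (if j = j1 then x else if j = j2 then 0 else 0))"
    by (rule sum.cong) (use r1 r2 in \<open>auto simp: u_def\<close>)
  also have "\<dots> = T1 * x + T2 * 0" using sum_two_pts[OF ne, of "\<lambda>j. T $ k $ j" x 0] T1_def T2_def by simp
  finally have Tv: "(T *v v) $ k = T1 * x + c" using Tv0 by simp
  have "T1 * x + c = r' $ k * (T1 * x + T2 * y) + a' $ k"
    using arg_cong[OF eq, of "\<lambda>w. w $ k"] Tu Tv by simp
  moreover have "r' $ k = 0 \<or> r' $ k = 1" using r'k by simp
  ultimately show False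
  proof (elim disjE)
    assume "T1 * x + c = r' $ k * (T1 * x + T2 * y) + a' $ k" "r' $ k = 0"
    thus False using xm aA m by simp
  next
    assume "T1 * x + c = r' $ k * (T1 * x + T2 * y) + a' $ k" "r' $ k = 1"
    hence "T1 * x + c = (T1 * x + T2 * y) + a' $ k" by simp
    hence "a' $ k = c - T2 * y" by linarith
    thus False using ym aA m by simp
  qed
qed

theorem lemma1:
  fixes V1 :: "((rat ^ 'd) \<times> (rat ^ 'd)) set"
    and V2 :: "((rat ^ 'e) \<times> (rat ^ 'e)) set"
    and T :: "rat ^ 'd ^ 'e"
  assumes "qvasr V1" and "qvasr V2" and "lin_sim V1 T V2"
  shows "coherent_matrix V1 T"
  unfolding coherent_matrix_def
proof
  fix k
  show "\<exists>i. \<forall>j. T $ k $ j \<noteq> 0 \<longrightarrow> coherent_dims V1 i j"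
  proof (cases "\<exists>i. T $ k $ i \<noteq> 0")
    case False thus ?thesis by auto
  next
    case True
    then obtain i where ti: "T $ k $ i \<noteq> 0" by blast
    have "coherent_dims V1 i j" if tj: "T $ k $ j \<noteq> 0" for j
      unfolding coherent_dims_def
    proof (clarify)
      fix r a assume ra: "(r, a) \<in> V1"
      have ri: "r $ i \<in> {0,1}" and rj: "r $ j \<in> {0,1}" using assms(1) ra unfolding qvasr_def by blast+
      show "r $ i = r $ j"
      proof (rule ccontr)
        assume "r $ i \<noteq> r $ j"
        hence "(r $ i = 1 \<and> r $ j = 0) \<or> (r $ j = 1 \<and> r $ i = 0)" using ri rj by auto
        thus False
        proof
          assume "r $ i = 1 \<and> r $ j = 0"
          thus False using key[OF assms(2,3) ra _ _ ti tj] by blast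
        next
          assume "r $ j = 1 \<and> r $ i = 0"
          thus False using key[OF assms(2,3) ra _ _ tj ti] by blast
        qed
      qed
    qed
    thus ?thesis by blast
  qed
qed

end
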